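(* Let $\rho\in(0,1)$ and $c_A,c_K>0$. There is a constant $c_1>0$, depending only on $A,B,Q,R,\rho,c_A,c_K$ and the dimensions, such that for any $K,K'\in\mathbb{R}^{k\times d}$ with $\|K\|,\|K'\|\le c_K$, $\|A-BK\|,\|A-BK'\|\le c_A$ and $\rho(A-BK),\rho(A-BK')\le\rho$, $$\|\theta_K-\theta_{K'}\|_F\le c_1\|K-K'\|_F.$$
   Context: $A\in\mathbb{R}^{d\times d}$, $B\in\mathbb{R}^{d\times k}$, $Q\in\mathbb{R}^{d\times d}$, $R\in\mathbb{R}^{k\times k}$ symmetric positive definite. $\rho(\cdot)$ is the spectral radius, $\|\cdot\|$ the operator norm. For $\rho(A-BK)<1$, $P_K$ is the solution of $P_K=Q+K^\top RK+(A-BK)^\top P_K(A-BK)$ and $$\theta_K=\begin{bmatrix}Q+A^\top P_KA & A^\top P_KB\\ B^\top P_KA & R+B^\top P_KB\end{bmatrix}.$$ *)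

theory Defs
  imports "HOL-Analysis.Analysis"
begin

definition cmat :: "real^'n^'n \<Rightarrow> complex^'n^'n" where
  "cmat M = (\<chi> i j. complex_of_real (M $ i $ j))"

definition spec_rad :: "real^'n^'n \<Rightarrow> real" where
  "spec_rad M = Sup {cmod l | l. \<exists>v::complex^'n. v \<noteq> 0 \<and> cmat M *v v = l *s v}"

definition opnorm :: "real^'n^'m \<Rightarrow> real" where
  "opnorm M = onorm (\<lambda>x. M *v x)"

text \<open>Frobenius norm; coincides with the built-in norm on real^'n^'m.\<close>
definition frob :: "real^'n^'m \<Rightarrow> real" where
  "frob M = sqrt (\<Sum>i\<in>UNIV. \<Sum>j\<in>UNIV. (M $ i $ j)^2)"

definition sym_pd :: "real^'n^'n \<Rightarrow> bool" where
  "sym_pd M \<longleftrightarrow> transpose M = M \<and> (\<forall>x. x \<noteq> 0 \<longrightarrow> x \<bullet> (M *v x) > 0)"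

text \<open>P_K: the solution of the Lyapunov equation (unique when rho(A-BK) < 1).\<close>
definition P_K :: "real^'d^'d \<Rightarrow> real^'k^'d \<Rightarrow> real^'d^'d \<Rightarrow> real^'k^'k \<Rightarrow> real^'d^'k \<Rightarrow> real^'d^'d" where
  "P_K A B Q R K = (THE P. P = Q + transpose K ** R ** K + transpose (A - B ** K) ** P ** (A - B ** K))"

definition theta :: "real^'d^'d \<Rightarrow> real^'k^'d \<Rightarrow> real^'d^'d \<Rightarrow> real^'k^'k \<Rightarrow> real^'d^'k \<Rightarrow> real^('d+'k)^('d+'k)" where
  "theta A B Q R K = (let P = P_K A B Q R K;
      M11 = Q + transpose A ** P ** A; M12 = transpose A ** P ** B;
      M21 = transpose B ** P ** A; M22 = R + transpose B ** P ** B in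
    (\<chi> i j. case i of
        Inl a \<Rightarrow> (case j of Inl b \<Rightarrow> M11 $ a $ b | Inr b \<Rightarrow> M12 $ a $ b)
      | Inr a \<Rightarrow> (case j of Inl b \<Rightarrow> M21 $ a $ b | Inr b \<Rightarrow> M22 $ a $ b)))"

end

theory Submission
  imports Defs "Jordan_Normal_Form.Spectral_Radius"
begin

no_notation vec_index (infixl "$" 100)


definition l1 :: "real^'n^'m \<Rightarrow> real" where
  "l1 M = (\<Sum>i\<in>UNIV. \<Sum>j\<in>UNIV. \<bar>M$i$j\<bar>)"

lemma l1_nonneg: "0 \<le> l1 M" by (simp add: l1_def sum_nonneg)

lemma l1_add: "l1 (A + B) \<le> l1 A + l1 B"
  unfolding l1_def sum.distrib[symmetric] by (intro sum_mono) (simp add: abs_triangle_ineq)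

lemma l1_uminus: "l1 (-A) = l1 A" by (simp add: l1_def)

lemma l1_diff: "l1 (A - B) \<le> l1 A + l1 B"
  using l1_add[of A "-B"] by (simp add: l1_uminus)

lemma l1_scale: "l1 (c *\<^sub>R A) = \<bar>c\<bar> * l1 A"
  by (simp add: l1_def sum_distrib_left abs_mult)

lemma l1_transpose: "l1 (transpose A) = l1 A"
  unfolding l1_def transpose_def by (simp, rule sum.swap)

lemma l1_eq_0: "l1 A = 0 \<Longrightarrow> A = 0"
  unfolding l1_def
  by (simp add: sum_nonneg_eq_0_iff sum_nonneg Finite_Cartesian_Product.vec_eq_iff)

lemma l1_comp: "\<bar>M$i$j\<bar> \<le> l1 M"
proof -
  have "\<bar>M$i$j\<bar> \<le> (\<Sum>j\<in>UNIV. \<bar>M$i$j\<bar>)" by (rule member_le_sum) auto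
  also have "\<dots> \<le> l1 M" unfolding l1_def by (rule member_le_sum) (auto intro: sum_nonneg)
  finally show ?thesis .
qed

lemma l1_row: "(\<Sum>j\<in>UNIV. \<bar>M$i$j\<bar>) \<le> l1 M"
  unfolding l1_def by (rule member_le_sum) (auto intro: sum_nonneg)

lemma l1_mult: "l1 (A ** B) \<le> l1 A * l1 B"
proof -
  have "l1 (A ** B) = (\<Sum>i\<in>UNIV. \<Sum>j\<in>UNIV. \<bar>\<Sum>k\<in>UNIV. A$i$k * B$k$j\<bar>)"
    by (simp add: l1_def matrix_matrix_mult_def)
  also have "\<dots> \<le> (\<Sum>i\<in>UNIV. \<Sum>j\<in>UNIV. \<Sum>k\<in>UNIV. \<bar>A$i$k\<bar> * \<bar>B$k$j\<bar>)"
    by (intro sum_mono, rule order_trans[OF sum_abs], simp add: abs_mult)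
  also have "\<dots> = (\<Sum>i\<in>UNIV. \<Sum>k\<in>UNIV. \<bar>A$i$k\<bar> * (\<Sum>j\<in>UNIV. \<bar>B$k$j\<bar>))"
    by (rule sum.cong[OF refl], subst sum.swap, simp add: sum_distrib_left)
  also have "\<dots> \<le> (\<Sum>i\<in>UNIV. \<Sum>k\<in>UNIV. \<bar>A$i$k\<bar> * l1 B)"
    by (intro sum_mono mult_left_mono l1_row) auto
  also have "\<dots> = l1 A * l1 B" by (simp add: l1_def sum_distrib_right)
  finally show ?thesis .
qed

lemma frob_eq_norm: "frob M = norm M"
proof -
  have "norm (M$i) ^ 2 = (\<Sum>j\<in>UNIV. (M$i$j)^2)" for i
    unfolding norm_vec_def L2_set_def by (simp add: sum_nonneg)
  then show ?thesis unfolding frob_def norm_vec_def L2_set_def by simp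
qed

lemma norm_le_l1: "norm M \<le> l1 M"
proof -
  have "norm M \<le> (\<Sum>i\<in>UNIV. norm (M$i))"
    unfolding norm_vec_def by (rule L2_set_le_sum) simp
  also have "\<dots> \<le> l1 M" unfolding l1_def by (intro sum_mono norm_le_l1_cart)
  finally show ?thesis .
qed

lemma l1_le_norm: "l1 (M::real^'n^'m) \<le> real CARD('m) * real CARD('n) * norm M"
proof -
  have "\<bar>M$i$j\<bar> \<le> norm M" for i j
    using component_le_norm_cart[of "M$i" j] Finite_Cartesian_Product.norm_nth_le[of M i] by linarith
  then have "l1 M \<le> (\<Sum>i::'m\<in>UNIV. \<Sum>j::'n\<in>UNIV. norm M)"
    unfolding l1_def by (intro sum_mono) auto
  then show ?thesis by simp
qed

lemma l1_le_opnorm: "l1 (M::real^'n^'m) \<le> real CARD('m) * real CARD('n) * opnorm M"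
proof -
  have "\<bar>M$i$j\<bar> \<le> opnorm M" for i j
    using matrix_component_le_onorm[of M i j] by (simp add: opnorm_def)
  then have "l1 M \<le> (\<Sum>i::'m\<in>UNIV. \<Sum>j::'n\<in>UNIV. opnorm M)"
    unfolding l1_def by (intro sum_mono) auto
  then show ?thesis by simp
qed

lemma mat_rdiff: "((A::real^'n^'m) - B) ** C = A ** C - B ** C"
  by (simp add: matrix_matrix_mult_def Finite_Cartesian_Product.vec_eq_iff sum_subtractf[symmetric] left_diff_distrib)
lemma mat_ldiff: "(A::real^'n^'m) ** (B - C) = A ** B - A ** C"
  by (simp add: matrix_matrix_mult_def Finite_Cartesian_Product.vec_eq_iff sum_subtractf[symmetric] right_diff_distrib)
lemma mat_radd: "((A::real^'n^'m) + B) ** C = A ** C + B ** C"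
  by (simp add: matrix_matrix_mult_def Finite_Cartesian_Product.vec_eq_iff sum.distrib distrib_right)
lemma transpose_diff: "transpose (A - B) = transpose A - transpose B"
  by (simp add: transpose_def Finite_Cartesian_Product.vec_eq_iff)
lemma transpose_add: "transpose (A + B) = transpose A + transpose B"
  by (simp add: transpose_def Finite_Cartesian_Product.vec_eq_iff)

fun mpow :: "real^'n^'n \<Rightarrow> nat \<Rightarrow> real^'n^'n" where
  "mpow X 0 = Finite_Cartesian_Product.mat 1"
| "mpow X (Suc k) = X ** mpow X k"

lemma mpow_add: "mpow X (a + b) = mpow X a ** mpow X b"
  by (induct a) (auto simp: matrix_mul_assoc)

lemma mpow_mult: "mpow X (a * b) = mpow (mpow X a) b"
  by (induct b) (auto simp: mpow_add)

lemma mpow_Suc': "mpow X (Suc k) = mpow X k ** X"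
  using mpow_add[of X k 1] by simp

lemma mpow_scale: "mpow (c *\<^sub>R X) k = c ^ k *\<^sub>R mpow X k"
  by (induct k) (auto simp: scalar_matrix_assoc matrix_scalar_ac mult.commute)

lemma l1_id: "l1 (Finite_Cartesian_Product.mat 1 :: real^'n^'n) = real CARD('n)"
proof -
  have "(\<Sum>j\<in>UNIV. \<bar>(Finite_Cartesian_Product.mat 1 :: real^'n^'n)$i$j\<bar>) = 1" for i
    by (simp add: Finite_Cartesian_Product.mat_def if_distrib cong: if_cong)
  then show ?thesis unfolding l1_def by simp
qed

lemma l1_mpow_pos: "1 \<le> k \<Longrightarrow> l1 (mpow X k) \<le> l1 X ^ k"
proof (induct k)
  case 0 then show ?case by simp
next
  case (Suc k)
  show ?case
  proof (cases "k = 0")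
    case True then show ?thesis by simp
  next
    case False
    then have "l1 (mpow X k) \<le> l1 X ^ k" using Suc by simp
    then have "l1 X * l1 (mpow X k) \<le> l1 X * l1 X ^ k"
      by (intro mult_left_mono l1_nonneg)
    then show ?thesis using l1_mult[of X "mpow X k"] by simp
  qed
qed

lemma l1_mpow: "l1 (mpow (X::real^'n^'n) k) \<le> real CARD('n) * l1 X ^ k"
proof (cases "k = 0")
  case True then show ?thesis by (simp add: l1_id)
next
  case False
  then have "l1 (mpow X k) \<le> l1 X ^ k" by (intro l1_mpow_pos) auto
  moreover have "l1 X ^ k \<le> real CARD('n) * l1 X ^ k"
    using l1_nonneg[of X] by (simp add: mult_le_cancel_right1)
  ultimately show ?thesis by linarith
qed

definition Tm :: "real^'n^'n \<Rightarrow> nat \<Rightarrow> real^'n^'n \<Rightarrow> real^'n^'n" where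
  "Tm L t Y = transpose (mpow L t) ** Y ** mpow L t"

lemma Tm_add: "Tm L t (Y + Z) = Tm L t Y + Tm L t Z"
  by (simp add: Tm_def matrix_add_ldistrib mat_radd)

lemma Tm_Suc: "Tm L t (transpose L ** X ** L) = Tm L (Suc t) X"
  by (simp add: Tm_def matrix_transpose_mul matrix_mul_assoc)

lemma l1_Tm: "l1 (Tm L t Y) \<le> l1 (mpow L t)^2 * l1 Y"
proof -
  have "l1 (Tm L t Y) \<le> l1 (transpose (mpow L t) ** Y) * l1 (mpow L t)"
    unfolding Tm_def by (rule l1_mult)
  also have "\<dots> \<le> (l1 (mpow L t) * l1 Y) * l1 (mpow L t)"
    by (intro mult_right_mono l1_nonneg) (metis l1_mult l1_transpose)
  finally show ?thesis by (simp add: power2_eq_square mult_ac)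
qed

lemma telescope:
  assumes X: "X = E + transpose L ** X ** L"
  shows "X = (\<Sum>t<m. Tm L t E) + Tm L m X"
proof (induct m)
  case 0 show ?case by (simp add: Tm_def)
next
  case (Suc m)
  have "Tm L m X = Tm L m (E + transpose L ** X ** L)"
    by (rule arg_cong[where f="Tm L m", OF X])
  also have "\<dots> = Tm L m E + Tm L (Suc m) X" by (simp add: Tm_add Tm_Suc)
  finally show ?case using Suc by (simp add: add.assoc)
qed

lemma l1_sum: "l1 (\<Sum>t<(m::nat). f t) \<le> (\<Sum>t<m. l1 (f t))"
proof (induct m)
  case 0 show ?case by (simp add: l1_def)
next
  case (Suc m) then show ?case using l1_add[of "\<Sum>t<m. f t" "f m"] by simp
qed

lemma lyap_bound:
  assumes N: "l1 (mpow L N) \<le> 1/2" and X: "X = E + transpose L ** X ** L"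
  shows "l1 X \<le> 4/3 * (\<Sum>t<N. l1 (mpow L t)^2) * l1 E"
proof -
  have "l1 X \<le> l1 (\<Sum>t<N. Tm L t E) + l1 (Tm L N X)"
    using telescope[OF X, of N] l1_add by metis
  moreover have "l1 (\<Sum>t<N. Tm L t E) \<le> (\<Sum>t<N. l1 (mpow L t)^2 * l1 E)"
    using l1_sum[of "\<lambda>t. Tm L t E" N] sum_mono[of "{..<N}" "\<lambda>t. l1 (Tm L t E)" "\<lambda>t. l1 (mpow L t)^2 * l1 E"] l1_Tm
    by (meson order_trans)
  moreover have "l1 (mpow L N)^2 \<le> (1/2)^2"
    by (intro power_mono N l1_nonneg)
  then have "l1 (mpow L N)^2 * l1 X \<le> (1/2)^2 * l1 X"
    by (intro mult_right_mono l1_nonneg)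
  then have "l1 (Tm L N X) \<le> 1/4 * l1 X" using l1_Tm[of L N X] by (simp add: power2_eq_square)
  ultimately have "l1 X \<le> (\<Sum>t<N. l1 (mpow L t)^2) * l1 E + 1/4 * l1 X"
    by (simp add: sum_distrib_right)
  then show ?thesis by simp
qed

lemma lyap_unique:
  assumes N: "l1 (mpow L N) \<le> 1/2" and X: "X = E + transpose L ** X ** L"
    and Y: "Y = E + transpose L ** Y ** L"
  shows "X = Y"
proof -
  have "X - Y = 0 + transpose L ** (X - Y) ** L"
  proof -
    have "X - Y = (E + transpose L ** X ** L) - (E + transpose L ** Y ** L)"
      using X Y by simp
    also have "\<dots> = transpose L ** (X - Y) ** L" by (simp add: mat_ldiff mat_rdiff)
    finally show ?thesis by simp
  qed
  from lyap_bound[OF N this] have "l1 (X - Y) \<le> 0" by (simp add: l1_def)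
  then have "l1 (X - Y) = 0" using l1_nonneg[of "X - Y"] by linarith
  then show ?thesis using l1_eq_0 by fastforce
qed

lemma lyap_exists:
  assumes N: "l1 (mpow (L::real^'n^'n) N) \<le> 1/2"
  shows "\<exists>X. X = E + transpose L ** X ** L"
proof -
  define f where "f = (\<lambda>X::real^'n^'n. X - transpose L ** X ** L)"
  have lin: "linear f"
    by (rule linearI) (simp_all add: f_def matrix_add_ldistrib mat_radd scalar_matrix_assoc matrix_scalar_ac scaleR_diff_right)
  have inj: "inj f"
  proof (rule injI)
    fix X Y assume "f X = f Y"
    moreover have "X = f X + transpose L ** X ** L" "Y = f Y + transpose L ** Y ** L"
      by (simp_all add: f_def)
    ultimately have "X = f Y + transpose L ** X ** L" "Y = f Y + transpose L ** Y ** L"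
      by simp_all
    then show "X = Y" by (rule lyap_unique[OF N])
  qed
  have "surj f" by (rule linear_injective_imp_surjective[OF lin inj refl])
  then obtain X where "f X = E" by (metis surjD)
  then have "X = E + transpose L ** X ** L" by (auto simp: f_def)
  then show ?thesis by blast
qed

lemma PK_eq:
  assumes N: "l1 (mpow (A - B ** K) N) \<le> 1/2"
  shows "P_K A B Q R K = Q + transpose K ** R ** K + transpose (A - B ** K) ** P_K A B Q R K ** (A - B ** K)"
  unfolding P_K_def
proof (rule theI')
  show "\<exists>!P. P = Q + transpose K ** R ** K + transpose (A - B ** K) ** P ** (A - B ** K)"
    using lyap_exists[OF N] lyap_unique[OF N] by blast
qed




definition jx :: "nat \<Rightarrow> 'n::finite" where
  "jx = (SOME g. bij_betw g {..<CARD('n)} (UNIV::'n set))"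

lemma jx_bij: "bij_betw (jx :: nat \<Rightarrow> 'n::finite) {..<CARD('n)} UNIV"
proof -
  obtain g :: "nat \<Rightarrow> 'n" where "bij_betw g {0..<card (UNIV::'n set)} UNIV"
    using ex_bij_betw_nat_finite[of "UNIV::'n set"] by auto
  then have "\<exists>g::nat\<Rightarrow>'n. bij_betw g {..<CARD('n)} UNIV" by (auto simp: atLeast0LessThan)
  then show ?thesis unfolding jx_def by (rule someI_ex)
qed

definition ix :: "'n::finite \<Rightarrow> nat" where "ix = inv_into {..<CARD('n)} jx"

lemma ix_lt: "ix (u::'n::finite) < CARD('n)"
proof -
  have "bij_betw (ix::'n \<Rightarrow> nat) UNIV {..<CARD('n)}"
    unfolding ix_def by (rule bij_betw_inv_into[OF jx_bij])
  then show ?thesis by (auto dest: bij_betwE)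
qed

lemma jx_ix: "jx (ix (u::'n::finite)) = u"
  unfolding ix_def using bij_betw_inv_into_right[OF jx_bij] by auto

lemma ix_jx: "t < CARD('n) \<Longrightarrow> ix (jx t :: 'n::finite) = t"
  unfolding ix_def using bij_betw_inv_into_left[OF jx_bij] by auto

lemma jx_inj: "a < CARD('n) \<Longrightarrow> b < CARD('n) \<Longrightarrow> (jx a :: 'n::finite) = jx b \<longleftrightarrow> a = b"
  by (metis ix_jx)

lemma sum_jx: "(\<Sum>t<CARD('n). f (jx t :: 'n::finite)) = (\<Sum>u\<in>UNIV. f u)"
  using sum.reindex_bij_betw[OF jx_bij, of f] by simp

lemma sum_jx0: "(\<Sum>t\<in>{0..<CARD('n)}. f (jx t :: 'n::finite)) = (\<Sum>u\<in>UNIV. f u)"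
  using sum_jx[of f] by (simp add: atLeast0LessThan)

definition toJ :: "real^'n^'n \<Rightarrow> complex mat" where
  "toJ X = Matrix.mat CARD('n) CARD('n) (\<lambda>(a,b). complex_of_real (X $ jx a $ jx b))"

lemma toJ_carrier: "toJ (X::real^'n^'n) \<in> carrier_mat CARD('n) CARD('n)"
  by (simp add: toJ_def)

lemma toJ_dim[simp]: "dim_row (toJ (X::real^'n^'n)) = CARD('n)" "dim_col (toJ (X::real^'n^'n)) = CARD('n)"
  by (simp_all add: toJ_def)

lemma toJ_index: "a < CARD('n) \<Longrightarrow> b < CARD('n) \<Longrightarrow> toJ (X::real^'n^'n) $$ (a,b) = of_real (X $ jx a $ jx b)"
  by (simp add: toJ_def)

lemma toJ_mult: "toJ ((X::real^'n^'n) ** Y) = toJ X * toJ Y"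
proof (rule eq_matI)
  fix a b assume ab: "a < dim_row (toJ X * toJ Y)" "b < dim_col (toJ X * toJ Y)"
  then have a: "a < CARD('n)" and b: "b < CARD('n)" by simp_all
  have "(toJ X * toJ Y) $$ (a,b) = (\<Sum>t\<in>{0..<CARD('n)}. toJ X $$ (a,t) * toJ Y $$ (t,b))"
    using a b by (simp add: scalar_prod_def)
  also have "\<dots> = (\<Sum>t\<in>{0..<CARD('n)}. of_real (X $ jx a $ jx t) * of_real (Y $ jx t $ jx b))"
    using a b by (intro sum.cong) (auto simp: toJ_index)
  also have "\<dots> = (\<Sum>u\<in>UNIV. of_real (X $ jx a $ u) * of_real (Y $ u $ jx b))"
    by (rule sum_jx0)
  also have "\<dots> = toJ (X ** Y) $$ (a,b)"
    using a b by (simp add: toJ_index matrix_matrix_mult_def)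
  finally show "toJ (X ** Y) $$ (a,b) = (toJ X * toJ Y) $$ (a,b)" by simp
qed simp_all

lemma toJ_one: "toJ (Finite_Cartesian_Product.mat 1 :: real^'n^'n) = 1\<^sub>m CARD('n)"
  by (rule eq_matI) (auto simp: toJ_index Finite_Cartesian_Product.mat_def jx_inj)

lemma toJ_mpow: "toJ (mpow (X::real^'n^'n) k) = toJ X ^\<^sub>m k"
  by (induct k) (simp_all add: toJ_one mpow_Suc' toJ_mult del: mpow.simps(2))

lemma mpow_entry: "(mpow (X::real^'n^'n) k) $ u $ u' = Re ((toJ X ^\<^sub>m k) $$ (ix u, ix u'))"
  by (simp add: toJ_mpow[symmetric] toJ_index ix_lt jx_ix)

lemma eig_bridge:
  "eigenvalue (toJ (X::real^'n^'n)) \<mu> \<longleftrightarrow> (\<exists>v. v \<noteq> 0 \<and> cmat X *v v = \<mu> *s v)"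
proof
  assume "eigenvalue (toJ X) \<mu>"
  then obtain w where w: "w \<in> carrier_vec CARD('n)" "w \<noteq> 0\<^sub>v CARD('n)" "toJ X *\<^sub>v w = \<mu> \<cdot>\<^sub>v w"
    unfolding eigenvalue_def eigenvector_def by auto
  define v :: "complex^'n" where "v = (\<chi> u. vec_index w (ix u))"
  have "\<exists>t<CARD('n). vec_index w t \<noteq> 0"
  proof (rule ccontr)
    assume "\<not> ?thesis"
    then have "w = 0\<^sub>v CARD('n)" using w(1) by (intro eq_vecI) auto
    then show False using w(2) by simp
  qed
  then obtain t where t: "t < CARD('n)" "vec_index w t \<noteq> 0" by auto
  have "v $ jx t \<noteq> 0" using t by (simp add: v_def ix_jx)
  then have "v \<noteq> 0" by auto
  moreover have "cmat X *v v = \<mu> *s v"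
  proof -
    have "(cmat X *v v) $ u = (\<mu> *s v) $ u" for u
    proof -
      have "vec_index (toJ X *\<^sub>v w) (ix u) = vec_index (\<mu> \<cdot>\<^sub>v w) (ix u)" using w(3) by simp
      then have eq: "(\<Sum>t\<in>{0..<CARD('n)}. toJ X $$ (ix u, t) * vec_index w t) = \<mu> * vec_index w (ix u)"
        using w(1) ix_lt[of u] by (simp add: scalar_prod_def)
      have "(\<Sum>t\<in>{0..<CARD('n)}. toJ X $$ (ix u, t) * vec_index w t)
          = (\<Sum>t\<in>{0..<CARD('n)}. of_real (X $ u $ jx t) * vec_index w (ix (jx t :: 'n)))"
        by (intro sum.cong) (auto simp: toJ_index ix_lt jx_ix ix_jx)
      also have "\<dots> = (\<Sum>u'\<in>UNIV. of_real (X $ u $ u') * vec_index w (ix u'))"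
        by (rule sum_jx0[where f="\<lambda>u'. of_real (X $ u $ u') * vec_index w (ix u')"])
      finally show ?thesis using eq
        by (simp add: cmat_def matrix_vector_mult_def v_def)
    qed
    then show ?thesis by (simp add: Finite_Cartesian_Product.vec_eq_iff)
  qed
  ultimately show "\<exists>v. v \<noteq> 0 \<and> cmat X *v v = \<mu> *s v" by blast
next
  assume "\<exists>v. v \<noteq> 0 \<and> cmat X *v v = \<mu> *s v"
  then obtain v where v: "v \<noteq> 0" "cmat X *v v = \<mu> *s v" by auto
  define w where "w = Matrix.vec CARD('n) (\<lambda>t. v $ jx t)"
  have wc: "w \<in> carrier_vec CARD('n)" by (simp add: w_def)
  obtain u where u: "v $ u \<noteq> 0" using v(1) by (metis Finite_Cartesian_Product.vec_eq_iff zero_index)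
  have "vec_index w (ix u) \<noteq> 0" using u by (simp add: w_def ix_lt jx_ix)
  then have wn: "w \<noteq> 0\<^sub>v CARD('n)" using ix_lt[of u] by auto
  have "toJ X *\<^sub>v w = \<mu> \<cdot>\<^sub>v w"
  proof (rule eq_vecI)
    fix t assume "t < dim_vec (\<mu> \<cdot>\<^sub>v w)"
    then have t: "t < CARD('n)" by (simp add: w_def)
    have "vec_index (toJ X *\<^sub>v w) t = (\<Sum>s\<in>{0..<CARD('n)}. toJ X $$ (t, s) * vec_index w s)"
      using t by (simp add: scalar_prod_def w_def)
    also have "\<dots> = (\<Sum>s\<in>{0..<CARD('n)}. of_real (X $ jx t $ jx s) * v $ jx s)"
      using t by (intro sum.cong) (auto simp: toJ_index w_def)
    also have "\<dots> = (\<Sum>u'\<in>UNIV. of_real (X $ jx t $ u') * v $ u')"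
      by (rule sum_jx0[where f="\<lambda>u'. of_real (X $ jx t $ u') * v $ u'"])
    also have "\<dots> = (cmat X *v v) $ jx t" by (simp add: cmat_def matrix_vector_mult_def)
    also have "\<dots> = \<mu> * v $ jx t" using v(2) by simp
    also have "\<dots> = vec_index (\<mu> \<cdot>\<^sub>v w) t" using t by (simp add: w_def)
    finally show "vec_index (toJ X *\<^sub>v w) t = vec_index (\<mu> \<cdot>\<^sub>v w) t" .
  qed (simp add: w_def)
  then show "eigenvalue (toJ X) \<mu>" using wc wn
    unfolding eigenvalue_def eigenvector_def by auto
qed




lemma eig_le_l1:
  fixes X :: "real^'n^'n"
  assumes v: "v \<noteq> 0" and ev: "cmat X *v v = \<mu> *s v"
  shows "cmod \<mu> \<le> l1 X"
proof -
  define m where "m = Max (range (\<lambda>j. cmod (v$j)))"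
  have fin: "finite (range (\<lambda>j. cmod (v$j)))" by simp
  have "m \<in> range (\<lambda>j. cmod (v$j))" unfolding m_def by (rule Max_in[OF fin]) simp
  then obtain i where i: "cmod (v$i) = m" by auto
  have le: "cmod (v$j) \<le> cmod (v$i)" for j using Max_ge[OF fin] i m_def by auto
  obtain j0 where "v$j0 \<noteq> 0" using v by (metis Finite_Cartesian_Product.vec_eq_iff zero_index)
  then have pos: "0 < cmod (v$i)" using le[of j0] by (meson zero_less_norm_iff order_less_le_trans)
  have "\<mu> * v$i = (\<Sum>j\<in>UNIV. of_real (X$i$j) * v$j)"
    using arg_cong[where f="\<lambda>x. x$i", OF ev] by (simp add: cmat_def matrix_vector_mult_def)
  then have "cmod \<mu> * cmod (v$i) = cmod (\<Sum>j\<in>UNIV. of_real (X$i$j) * v$j)" by (metis norm_mult)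
  also have "\<dots> \<le> (\<Sum>j\<in>UNIV. \<bar>X$i$j\<bar> * cmod (v$j))"
    by (rule order_trans[OF norm_sum]) (simp add: norm_mult)
  also have "\<dots> \<le> (\<Sum>j\<in>UNIV. \<bar>X$i$j\<bar> * cmod (v$i))"
    by (intro sum_mono mult_left_mono le) auto
  also have "\<dots> = (\<Sum>j\<in>UNIV. \<bar>X$i$j\<bar>) * cmod (v$i)" by (simp add: sum_distrib_right)
  also have "\<dots> \<le> l1 X * cmod (v$i)" by (intro mult_right_mono l1_row) auto
  finally show ?thesis using pos by simp
qed

lemma eig_le_specrad:
  fixes X :: "real^'n^'n"
  assumes "v \<noteq> 0" "cmat X *v v = \<mu> *s v"
  shows "cmod \<mu> \<le> spec_rad X"
  unfolding spec_rad_def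
proof (rule cSup_upper)
  show "cmod \<mu> \<in> {cmod l |l. \<exists>v. v \<noteq> 0 \<and> cmat X *v v = l *s v}" using assms by blast
  show "bdd_above {cmod l |l. \<exists>v. v \<noteq> 0 \<and> cmat X *v v = l *s v}"
    by (rule bdd_aboveI[of _ "l1 X"]) (auto intro: eig_le_l1)
qed

lemma prod_lower:
  assumes "\<forall>a\<in>set as. c \<le> cmod (z - a)" "0 \<le> c"
  shows "c ^ length as \<le> cmod (poly (\<Prod>a\<leftarrow>as. [:-a, 1:]) z)"
  using assms
proof (induct as)
  case Nil then show ?case by simp
next
  case (Cons a as)
  have "poly [:-a, 1:] z = z - a" by simp
  then have "poly (\<Prod>a\<leftarrow>a#as. [:-a, 1:]) z = (z - a) * poly (\<Prod>a\<leftarrow>as. [:-a, 1:]) z"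
    by (simp add: algebra_simps)
  then have "cmod (poly (\<Prod>a\<leftarrow>a#as. [:-a, 1:]) z) = cmod (z - a) * cmod (poly (\<Prod>a\<leftarrow>as. [:-a, 1:]) z)"
    by (simp only: norm_mult)
  moreover have "c * c ^ length as \<le> cmod (z - a) * cmod (poly (\<Prod>a\<leftarrow>as. [:-a, 1:]) z)"
    using Cons by (intro mult_mono) auto
  ultimately show ?case by simp
qed

lemma T_in_S:
  fixes X :: "real^'n^'n"
  assumes sr: "spec_rad X \<le> \<rho>" and r: "\<rho> \<le> r" and z: "r \<le> cmod z"
  shows "(r - \<rho>) ^ CARD('n) \<le> cmod (poly (char_poly (toJ X)) z)"
proof -
  obtain as where as: "char_poly (toJ X) = (\<Prod>a\<leftarrow>as. [:- a, 1:])" "length as = CARD('n)"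
    using char_poly_factorized[OF toJ_carrier] by blast
  have "r - \<rho> \<le> cmod (z - a)" if a: "a \<in> set as" for a
  proof -
    have "poly (char_poly (toJ X)) a = 0" unfolding as(1) using a by (rule linear_poly_root)
    then have "eigenvalue (toJ X) a" using eigenvalue_root_char_poly[OF toJ_carrier] by blast
    then obtain v where "v \<noteq> 0" "cmat X *v v = a *s v" using eig_bridge by blast
    then have "cmod a \<le> \<rho>" using eig_le_specrad sr by fastforce
    moreover have "cmod z - cmod a \<le> cmod (z - a)" by (rule norm_triangle_ineq2)
    ultimately show ?thesis using z by linarith
  qed
  then show ?thesis using prod_lower[of as "r - \<rho>" z] as r by auto
qed

lemma charpoly_formula:
  "poly (char_poly (toJ (X::real^'n^'n))) z =
    (\<Sum>p\<in>{p. p permutes {0..<CARD('n)}}. signof p *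
       (\<Prod>i=0..<CARD('n). (if i = p i then z else 0) - of_real (X $ jx i $ jx (p i))))"
proof -
  have "poly (char_poly (toJ X)) z = det (- char_matrix (toJ X) z)"
    by (rule char_poly_matrix[OF toJ_carrier])
  also have "\<dots> = (\<Sum>p\<in>{p. p permutes {0..<CARD('n)}}. signof p *
       (\<Prod>i=0..<CARD('n). (- char_matrix (toJ X) z) $$ (i, p i)))"
    by (rule det_def') (simp add: char_matrix_def)
  also have "\<dots> = (\<Sum>p\<in>{p. p permutes {0..<CARD('n)}}. signof p *
       (\<Prod>i=0..<CARD('n). (if i = p i then z else 0) - of_real (X $ jx i $ jx (p i))))"
  proof (intro sum.cong refl arg_cong[where f="\<lambda>x. _ * x"] prod.cong)
    fix p i assume p: "p \<in> {p. p permutes {0..<CARD('n)}}" and i: "i \<in> {0..<CARD('n)}"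
    have pi: "p i < CARD('n)" using p i permutes_in_image[of p "{0..<CARD('n)}" i] by auto
    show "(- char_matrix (toJ X) z) $$ (i, p i) = (if i = p i then z else 0) - of_real (X $ jx i $ jx (p i))"
      using i pi by (simp add: char_matrix_def toJ_index)
  qed
  finally show ?thesis .
qed

lemma charpoly_cont:
  "continuous_on UNIV (\<lambda>X::real^'n^'n. cmod (poly (char_poly (toJ X)) z))"
  unfolding charpoly_formula
  by (intro continuous_intros)

lemma mpow_cont: "continuous_on UNIV (\<lambda>Y::real^'n^'n. mpow Y k)"
proof (induct k)
  case 0 then show ?case by simp
next
  case (Suc k)
  have "continuous_on UNIV (\<lambda>Y::real^'n^'n. \<chi> i j. \<Sum>m\<in>UNIV. Y $ i $ m * mpow Y k $ m $ j)"
    by (intro continuous_intros Suc continuous_on_id)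
  then show ?case by (simp add: matrix_matrix_mult_def)
qed

lemma l1_mpow_cont: "continuous_on UNIV (\<lambda>Y::real^'n^'n. l1 (mpow Y k))"
  unfolding l1_def by (intro continuous_intros mpow_cont)




lemma decay:
  fixes X :: "real^'n^'n"
  assumes r0: "0 < r" and r1: "r < 1"
    and nz: "\<forall>z. r \<le> cmod z \<longrightarrow> 0 < cmod (poly (char_poly (toJ X)) z)"
  shows "\<exists>k\<ge>1. l1 (mpow X k) < 1/2"
proof -
  define X' where "X' = (1/r) *\<^sub>R X"
  have XX': "X = r *\<^sub>R X'" using r0 by (simp add: X'_def)
  have ev: "cmod \<mu> < 1" if "eigenvalue (toJ X') \<mu>" for \<mu>
  proof -
    from that obtain v where v: "v \<noteq> 0" "cmat X' *v v = \<mu> *s v" using eig_bridge by blast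
    have "cmat X *v v = of_real r *s (cmat X' *v v)"
      by (simp add: XX' cmat_def matrix_vector_mult_def Finite_Cartesian_Product.vec_eq_iff sum_distrib_left mult.assoc)
    also have "\<dots> = (of_real r * \<mu>) *s v" using v(2) by (simp add: vector_smult_assoc)
    finally have "eigenvalue (toJ X) (of_real r * \<mu>)" using eig_bridge v(1) by blast
    then have "poly (char_poly (toJ X)) (of_real r * \<mu>) = 0"
      using eigenvalue_root_char_poly[OF toJ_carrier] by blast
    then have "\<not> r \<le> cmod (of_real r * \<mu>)" using nz by force
    then have "r * cmod \<mu> < r * 1" using r0 by (simp add: norm_mult)
    then show ?thesis using r0 by simp
  qed
  have n0: "0 < CARD('n)" by simp
  from spectral_radius_mem_max(1)[OF toJ_carrier n0, of X']
  obtain \<mu> where "\<mu> \<in> spectrum (toJ X')" "spectral_radius (toJ X') = cmod \<mu>" by auto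
  then have "spectral_radius (toJ X') < 1" using ev by (simp add: spectrum_def)
  from spectral_radius_jnf_norm_bound_less_1_upper_triangular[OF toJ_carrier this]
  obtain c where c: "\<forall>k. norm_bound (toJ X' ^\<^sub>m k) c" by auto
  define C where "C = real CARD('n) * real CARD('n) * (\<bar>c\<bar> + 1)"
  have C0: "0 < C" by (simp add: C_def add_pos_nonneg)
  have bnd: "l1 (mpow X k) \<le> r ^ k * C" for k
  proof -
    have "\<bar>mpow X' k $ u $ u'\<bar> \<le> \<bar>c\<bar> + 1" for u u'
    proof -
      have "\<bar>mpow X' k $ u $ u'\<bar> \<le> cmod ((toJ X' ^\<^sub>m k) $$ (ix u, ix u'))"
        unfolding mpow_entry by (rule abs_Re_le_cmod)
      also have "\<dots> \<le> c" using c[rule_format, of k] ix_lt[of u] ix_lt[of u']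
        unfolding norm_bound_def by (simp add: pow_mat_dim_square[OF toJ_carrier])
      finally show ?thesis by linarith
    qed
    then have "l1 (mpow X' k) \<le> (\<Sum>i::'n\<in>UNIV. \<Sum>j::'n\<in>UNIV. \<bar>c\<bar> + 1)"
      unfolding l1_def by (intro sum_mono) auto
    then have "l1 (mpow X' k) \<le> C" by (simp add: C_def)
    moreover have "l1 (mpow X k) = r ^ k * l1 (mpow X' k)"
      using r0 by (simp add: XX' mpow_scale l1_scale)
    ultimately show ?thesis using r0 by (simp add: mult_left_mono)
  qed
  obtain k0 where k0: "r ^ k0 < 1 / (2 * C)" using real_arch_pow_inv[of "1/(2*C)" r] C0 r1 by auto
  have "r ^ Suc k0 \<le> r ^ k0" using r0 r1 by (simp add: power_decreasing)
  then have "r ^ Suc k0 * C < 1 / (2 * C) * C" using k0 C0 by (intro mult_strict_right_mono) auto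
  then have "l1 (mpow X (Suc k0)) < 1/2" using bnd[of "Suc k0"] C0 by simp
  then show ?thesis by (intro exI[of _ "Suc k0"]) auto
qed

lemma uniform_power:
  fixes cA \<rho> :: real
  assumes "0 < \<rho>" "\<rho> < 1"
  shows "\<exists>N. \<forall>L::real^'n^'n. opnorm L \<le> cA \<and> spec_rad L \<le> \<rho> \<longrightarrow> l1 (mpow L N) \<le> 1/2"
proof -
  define r where "r = (1 + \<rho>) / 2"
  have r: "\<rho> < r" "r < 1" "0 < r" using assms by (simp_all add: r_def)
  define cL where "cL = real CARD('n) * real CARD('n) * cA"
  define e where "e = (r - \<rho>) ^ CARD('n)"
  have e0: "0 < e" using r by (simp add: e_def)
  define S where "S = {X::real^'n^'n. l1 X \<le> cL \<and> (\<forall>z. r \<le> cmod z \<longrightarrow> e \<le> cmod (poly (char_poly (toJ X)) z))}"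
  have TS: "L \<in> S" if "opnorm L \<le> cA" "spec_rad L \<le> \<rho>" for L :: "real^'n^'n"
  proof -
    have "l1 L \<le> cL" using l1_le_opnorm[of L] that(1) unfolding cL_def
      by (meson order_trans mult_left_mono of_nat_0_le_iff mult_nonneg_nonneg)
    moreover have "\<forall>z. r \<le> cmod z \<longrightarrow> e \<le> cmod (poly (char_poly (toJ L)) z)"
      using T_in_S[OF that(2)] r unfolding e_def by auto
    ultimately show ?thesis by (simp add: S_def)
  qed
  have "closed S"
  proof -
    have "S = {X. l1 X \<le> cL} \<inter> (\<Inter>z\<in>{z. r \<le> cmod z}. {X. e \<le> cmod (poly (char_poly (toJ X)) z)})"
      by (auto simp: S_def)
    moreover have "closed {X::real^'n^'n. l1 X \<le> cL}"
      using l1_mpow_cont[of 1] by (intro closed_Collect_le) (auto intro: continuous_intros simp: l1_def)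
    moreover have "closed {X::real^'n^'n. e \<le> cmod (poly (char_poly (toJ X)) z)}" for z
      by (intro closed_Collect_le continuous_intros charpoly_cont)
    ultimately show ?thesis by (auto intro!: closed_Int closed_INT)
  qed
  moreover have "bounded S"
  proof -
    have "S \<subseteq> cball 0 cL"
    proof
      fix X assume "X \<in> S"
      then have "norm X \<le> cL" using norm_le_l1[of X] by (simp add: S_def)
      then show "X \<in> cball 0 cL" by simp
    qed
    then show ?thesis by (rule bounded_subset[OF bounded_cball])
  qed
  ultimately have cS: "compact S" by (simp add: compact_eq_bounded_closed)
  have "\<forall>X\<in>S. \<exists>k. 1 \<le> k \<and> l1 (mpow X k) < 1/2"
  proof
    fix X assume "X \<in> S"
    then have "\<forall>z. r \<le> cmod z \<longrightarrow> 0 < cmod (poly (char_poly (toJ X)) z)"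
      using e0 by (force simp: S_def)
    from decay[OF r(3) r(2) this] show "\<exists>k. 1 \<le> k \<and> l1 (mpow X k) < 1/2" by auto
  qed
  then obtain kf where kf: "\<And>X. X \<in> S \<Longrightarrow> 1 \<le> kf X \<and> l1 (mpow X (kf X)) < 1/2" by metis
  have opn: "open {Y. l1 (mpow Y (kf X)) < 1/2}" for X
    by (intro open_Collect_less l1_mpow_cont continuous_intros)
  have cov: "S \<subseteq> (\<Union>X\<in>S. {Y. l1 (mpow Y (kf X)) < 1/2})" using kf by auto
  obtain C' where C': "C' \<subseteq> S" "finite C'" "S \<subseteq> (\<Union>X\<in>C'. {Y. l1 (mpow Y (kf X)) < 1/2})"
    by (rule compactE_image[OF cS opn cov])
  define N where "N = (\<Prod>X\<in>C'. kf X)"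
  have "l1 (mpow L N) \<le> 1/2" if "opnorm L \<le> cA" "spec_rad L \<le> \<rho>" for L :: "real^'n^'n"
  proof -
    have "L \<in> S" using TS that by blast
    then obtain X where X: "X \<in> C'" "l1 (mpow L (kf X)) < 1/2" using C'(3) by blast
    have "kf X dvd N" unfolding N_def using X(1) C'(2) by (simp add: dvd_prodI)
    then obtain q where q: "N = kf X * q" by blast
    have "0 < N" unfolding N_def
    proof (rule prod_pos)
      fix Y assume "Y \<in> C'"
      then have "1 \<le> kf Y" using C'(1) kf by blast
      then show "0 < kf Y" by simp
    qed
    then have q1: "1 \<le> q" using q by (cases q) auto
    have "l1 (mpow L N) = l1 (mpow (mpow L (kf X)) q)" by (simp add: q mpow_mult)
    also have "\<dots> \<le> l1 (mpow L (kf X)) ^ q" by (rule l1_mpow_pos[OF q1])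
    also have "\<dots> \<le> (1/2) ^ q" using X(2) by (intro power_mono l1_nonneg) auto
    also have "\<dots> \<le> 1/2" using power_decreasing[OF q1, of "1/2::real"] by simp
    finally show ?thesis .
  qed
  then show ?thesis by blast
qed




lemma sum_UNIV_Plus:
  "(\<Sum>i\<in>(UNIV::('a::finite + 'b::finite) set). g i) = (\<Sum>a\<in>UNIV. g (Inl a)) + (\<Sum>b\<in>UNIV. g (Inr b))"
  by (subst UNIV_Plus_UNIV[symmetric], subst sum.Plus) (auto simp: comp_def)

lemma theta_diff_l1:
  fixes A :: "real^'d^'d" and B :: "real^'k^'d"
  shows "l1 (theta A B Q R K - theta A B Q R K') \<le> (l1 A + l1 B)^2 * l1 (P_K A B Q R K - P_K A B Q R K')"
proof -
  define D where "D = P_K A B Q R K - P_K A B Q R K'"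
  have eq: "theta A B Q R K - theta A B Q R K' = (\<chi> i j. case i of
        Inl a \<Rightarrow> (case j of Inl b \<Rightarrow> (transpose A ** D ** A) $ a $ b | Inr b \<Rightarrow> (transpose A ** D ** B) $ a $ b)
      | Inr a \<Rightarrow> (case j of Inl b \<Rightarrow> (transpose B ** D ** A) $ a $ b | Inr b \<Rightarrow> (transpose B ** D ** B) $ a $ b))"
    unfolding Finite_Cartesian_Product.vec_eq_iff
  proof (intro allI)
    fix i j :: "'d + 'k"
    show "(theta A B Q R K - theta A B Q R K') $ i $ j = (\<chi> i j. case i of
        Inl a \<Rightarrow> (case j of Inl b \<Rightarrow> (transpose A ** D ** A) $ a $ b | Inr b \<Rightarrow> (transpose A ** D ** B) $ a $ b)
      | Inr a \<Rightarrow> (case j of Inl b \<Rightarrow> (transpose B ** D ** A) $ a $ b | Inr b \<Rightarrow> (transpose B ** D ** B) $ a $ b)) $ i $ j"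
      by (cases i; cases j) (simp_all add: theta_def Let_def D_def mat_ldiff mat_rdiff)
  qed
  have "l1 (theta A B Q R K - theta A B Q R K') =
      l1 (transpose A ** D ** A) + l1 (transpose A ** D ** B) + l1 (transpose B ** D ** A) + l1 (transpose B ** D ** B)"
    unfolding eq l1_def sum_UNIV_Plus by (simp add: sum.distrib)
  also have "\<dots> \<le> l1 A * l1 D * l1 A + l1 A * l1 D * l1 B + l1 B * l1 D * l1 A + l1 B * l1 D * l1 B"
  proof -
    have b: "l1 (transpose X ** D ** Y) \<le> l1 X * l1 D * l1 Y" for X :: "real^'a^'d" and Y :: "real^'b^'d"
    proof -
      have "l1 (transpose X ** D ** Y) \<le> l1 (transpose X ** D) * l1 Y" by (rule l1_mult)
      also have "\<dots> \<le> (l1 X * l1 D) * l1 Y"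
        by (intro mult_right_mono l1_nonneg) (metis l1_mult l1_transpose)
      finally show ?thesis .
    qed
    show ?thesis using b[of A A] b[of A B] b[of B A] b[of B B] by linarith
  qed
  also have "\<dots> = (l1 A + l1 B)^2 * l1 D" by (simp add: power2_eq_square algebra_simps)
  finally show ?thesis unfolding D_def .
qed

theorem lemma4:
  fixes A :: "real^'d^'d" and B :: "real^'k^'d" and Q :: "real^'d^'d" and R :: "real^'k^'k"
    and rho cA cK :: real
  assumes "sym_pd Q" and "sym_pd R"
    and "0 < rho" and "rho < 1" and "0 < cA" and "0 < cK"
  shows "\<exists>c1>0. \<forall>(K::real^'d^'k) (K'::real^'d^'k).
           opnorm K \<le> cK \<and> opnorm K' \<le> cK \<and>
           opnorm (A - B ** K) \<le> cA \<and> opnorm (A - B ** K') \<le> cA \<and>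
           spec_rad (A - B ** K) \<le> rho \<and> spec_rad (A - B ** K') \<le> rho \<longrightarrow>
           frob (theta A B Q R K - theta A B Q R K') \<le> c1 * frob (K - K')"
proof -
  obtain N where N: "\<And>L::real^'d^'d. opnorm L \<le> cA \<Longrightarrow> spec_rad L \<le> rho \<Longrightarrow> l1 (mpow L N) \<le> 1/2"
    using uniform_power[OF assms(3,4), of cA] by blast
  define n where "n = real CARD('d)"
  define m where "m = real CARD('k)"
  define cL where "cL = n * n * cA"
  define cKK where "cKK = m * n * cK"
  define G where "G = (\<Sum>t<N. (n * cL ^ t)^2)"
  define H where "H = 4/3 * G"
  define cM where "cM = l1 Q + cKK * l1 R * cKK"
  define cP where "cP = H * cM"
  define cE where "cE = 2 * cKK * l1 R + 2 * l1 B * cP * cL"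
  define c1 where "c1 = (l1 A + l1 B)^2 * H * cE * (m * n) + 1"
  have n0: "0 \<le> n" and m0: "0 \<le> m" by (simp_all add: n_def m_def)
  have cL0: "0 \<le> cL" using n0 assms by (simp add: cL_def)
  have cKK0: "0 \<le> cKK" using n0 m0 assms by (simp add: cKK_def)
  have G0: "0 \<le> G" by (simp add: G_def sum_nonneg)
  have H0: "0 \<le> H" using G0 by (simp add: H_def)
  have cM0: "0 \<le> cM" using cKK0 l1_nonneg[of Q] l1_nonneg[of R] by (simp add: cM_def)
  have cP0: "0 \<le> cP" using H0 cM0 by (simp add: cP_def)
  have cE0: "0 \<le> cE" using cKK0 cP0 cL0 l1_nonneg[of R] l1_nonneg[of B] by (simp add: cE_def)
  have "0 \<le> (l1 A + l1 B)^2 * H * cE * (m * n)" using H0 cE0 n0 m0 by (intro mult_nonneg_nonneg) auto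
  then have c10: "0 < c1" by (simp add: c1_def)
  have single: "l1 (mpow (A - B ** K) N) \<le> 1/2 \<and> l1 (A - B ** K) \<le> cL \<and> l1 K \<le> cKK \<and>
      (\<Sum>t<N. l1 (mpow (A - B ** K) t)^2) \<le> G \<and>
      P_K A B Q R K = Q + transpose K ** R ** K + transpose (A - B ** K) ** P_K A B Q R K ** (A - B ** K) \<and>
      l1 (P_K A B Q R K) \<le> cP"
    if K: "opnorm K \<le> cK" "opnorm (A - B ** K) \<le> cA" "spec_rad (A - B ** K) \<le> rho" for K :: "real^'d^'k"
  proof -
    define L where "L = A - B ** K"
    have NL: "l1 (mpow L N) \<le> 1/2" using N K unfolding L_def by blast
    have lL: "l1 L \<le> cL" using l1_le_opnorm[of L] K(2) n0 unfolding L_def cL_def n_def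
      by (meson order_trans mult_left_mono mult_nonneg_nonneg of_nat_0_le_iff)
    have lK: "l1 K \<le> cKK" using l1_le_opnorm[of K] K(1) n0 m0 unfolding cKK_def n_def m_def
      by (meson order_trans mult_left_mono mult_nonneg_nonneg of_nat_0_le_iff)
    have GL: "(\<Sum>t<N. l1 (mpow L t)^2) \<le> G"
      unfolding G_def
    proof (intro sum_mono power_mono)
      fix t
      have "l1 (mpow L t) \<le> n * l1 L ^ t" using l1_mpow[of L t] by (simp add: n_def)
      also have "\<dots> \<le> n * cL ^ t" using lL n0 l1_nonneg[of L] by (intro mult_left_mono power_mono) auto
      finally show "l1 (mpow L t) \<le> n * cL ^ t" .
    qed (simp add: l1_nonneg)
    have PK: "P_K A B Q R K = Q + transpose K ** R ** K + transpose L ** P_K A B Q R K ** L"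
      using PK_eq[OF NL[unfolded L_def]] unfolding L_def .
    have "l1 (Q + transpose K ** R ** K) \<le> cM"
    proof -
      have "l1 (transpose K ** R ** K) \<le> l1 K * l1 R * l1 K"
        by (metis l1_mult l1_transpose l1_nonneg mult_right_mono order_trans)
      also have "\<dots> \<le> cKK * l1 R * cKK" using lK l1_nonneg[of K] l1_nonneg[of R]
        by (intro mult_mono mult_nonneg_nonneg) (auto simp: cKK0)
      finally show ?thesis using l1_add[of Q "transpose K ** R ** K"] by (simp add: cM_def)
    qed
    moreover have "l1 (P_K A B Q R K) \<le> 4/3 * (\<Sum>t<N. l1 (mpow L t)^2) * l1 (Q + transpose K ** R ** K)"
      by (rule lyap_bound[OF NL PK])
    moreover have "4/3 * (\<Sum>t<N. l1 (mpow L t)^2) * l1 (Q + transpose K ** R ** K) \<le> 4/3 * G * cM"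
      by (rule mult_mono) (use GL l1_nonneg[of "Q + transpose K ** R ** K"] \<open>l1 (Q + transpose K ** R ** K) \<le> cM\<close> G0 in \<open>auto intro: sum_nonneg\<close>)
    ultimately have "l1 (P_K A B Q R K) \<le> 4/3 * G * cM" by linarith
    then show ?thesis using NL lL lK GL PK unfolding L_def cP_def H_def by simp
  qed
  have main: "frob (theta A B Q R K - theta A B Q R K') \<le> c1 * frob (K - K')"
    if K: "opnorm K \<le> cK" "opnorm K' \<le> cK" "opnorm (A - B ** K) \<le> cA" "opnorm (A - B ** K') \<le> cA"
       "spec_rad (A - B ** K) \<le> rho" "spec_rad (A - B ** K') \<le> rho" for K K' :: "real^'d^'k"
  proof -
    define L where "L = A - B ** K"
    define L' where "L' = A - B ** K'"
    define P where "P = P_K A B Q R K"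
    define P' where "P' = P_K A B Q R K'"
    define \<delta> where "\<delta> = l1 (K - K')"
    note s1 = single[OF K(1,3,5)] and s2 = single[OF K(2,4,6)]
    have PP: "P = Q + transpose K ** R ** K + transpose L ** P ** L" using s1 unfolding P_def L_def by blast
    have PP': "P' = Q + transpose K' ** R ** K' + transpose L' ** P' ** L'" using s2 unfolding P'_def L'_def by blast
    define E where "E = (transpose (K - K') ** R ** K + transpose K' ** R ** (K - K'))
       + (transpose (L - L') ** P' ** L + transpose L' ** P' ** (L - L'))"
    have DE: "P - P' = E + transpose L ** (P - P') ** L"
    proof -
      have "P - P' = (Q + transpose K ** R ** K + transpose L ** P ** L) - (Q + transpose K' ** R ** K' + transpose L' ** P' ** L')"
        using PP PP' by simp
      also have "\<dots> = E + transpose L ** (P - P') ** L"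
        unfolding E_def by (simp add: mat_ldiff mat_rdiff transpose_diff)
      finally show ?thesis .
    qed
    have LL: "L - L' = B ** (K' - K)" by (simp add: L_def L'_def mat_ldiff)
    have lLL: "l1 (L - L') \<le> l1 B * \<delta>"
      using l1_mult[of B "K' - K"] l1_uminus[of "K - K'"] unfolding LL \<delta>_def by simp
    have lL: "l1 L \<le> cL" "l1 L' \<le> cL" using s1 s2 unfolding L_def L'_def by auto
    have lK: "l1 K \<le> cKK" "l1 K' \<le> cKK" using s1 s2 by auto
    have lP': "l1 P' \<le> cP" using s2 unfolding P'_def by auto
    have d0: "0 \<le> \<delta>" by (simp add: \<delta>_def l1_nonneg)
    have tri: "l1 (transpose X ** Y ** Z) \<le> l1 X * l1 Y * l1 Z" for X Y Z :: "real^'a^'a"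
      by (metis l1_mult l1_transpose l1_nonneg mult_right_mono order_trans)
    have lE: "l1 E \<le> cE * \<delta>"
    proof -
      have e1: "l1 (transpose (K - K') ** R ** K) \<le> \<delta> * l1 R * cKK"
      proof -
        have "l1 (transpose (K - K') ** R ** K) \<le> l1 (transpose (K - K') ** R) * l1 K" by (rule l1_mult)
        also have "\<dots> \<le> (\<delta> * l1 R) * l1 K" unfolding \<delta>_def
          by (intro mult_right_mono l1_nonneg) (metis l1_mult l1_transpose)
        also have "\<dots> \<le> (\<delta> * l1 R) * cKK" using lK d0 l1_nonneg[of R] by (intro mult_left_mono) auto
        finally show ?thesis .
      qed
      have e2: "l1 (transpose K' ** R ** (K - K')) \<le> cKK * l1 R * \<delta>"
      proof -
        have "l1 (transpose K' ** R ** (K - K')) \<le> l1 (transpose K' ** R) * \<delta>" unfolding \<delta>_def by (rule l1_mult)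
        also have "\<dots> \<le> (l1 K' * l1 R) * \<delta>"
          by (intro mult_right_mono d0) (metis l1_mult l1_transpose)
        also have "\<dots> \<le> (cKK * l1 R) * \<delta>" using lK d0 l1_nonneg[of R] by (intro mult_right_mono) auto
        finally show ?thesis .
      qed
      have bd0: "0 \<le> l1 B * \<delta>" using lLL l1_nonneg[of "L - L'"] by linarith
      have e3: "l1 (transpose (L - L') ** P' ** L) \<le> (l1 B * \<delta>) * cP * cL"
      proof -
        have h1: "l1 (L - L') * l1 P' \<le> (l1 B * \<delta>) * cP"
          by (rule mult_mono) (use lLL lP' l1_nonneg[of P'] bd0 in auto)
        have "l1 (L - L') * l1 P' * l1 L \<le> (l1 B * \<delta>) * cP * cL"
          by (rule mult_mono[OF h1]) (use lL l1_nonneg[of L] bd0 cP0 in auto)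
        then show ?thesis using tri[of "L - L'" P' L] by linarith
      qed
      have e4: "l1 (transpose L' ** P' ** (L - L')) \<le> cL * cP * (l1 B * \<delta>)"
      proof -
        have h1: "l1 L' * l1 P' \<le> cL * cP"
          by (rule mult_mono) (use lL lP' l1_nonneg[of P'] cL0 in auto)
        have "l1 L' * l1 P' * l1 (L - L') \<le> cL * cP * (l1 B * \<delta>)"
          by (rule mult_mono[OF h1]) (use lLL l1_nonneg[of "L - L'"] cL0 cP0 in auto)
        then show ?thesis using tri[of L' P' "L - L'"] by linarith
      qed
      have "l1 E \<le> \<delta> * l1 R * cKK + cKK * l1 R * \<delta> + ((l1 B * \<delta>) * cP * cL + cL * cP * (l1 B * \<delta>))"
        unfolding E_def using e1 e2 e3 e4
          l1_add[of "transpose (K - K') ** R ** K" "transpose K' ** R ** (K - K')"]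
          l1_add[of "transpose (L - L') ** P' ** L" "transpose L' ** P' ** (L - L')"]
          l1_add[of "transpose (K - K') ** R ** K + transpose K' ** R ** (K - K')" "transpose (L - L') ** P' ** L + transpose L' ** P' ** (L - L')"]
        by linarith
      also have "\<dots> = cE * \<delta>" by (simp add: cE_def algebra_simps)
      finally show ?thesis .
    qed
    have "l1 (P - P') \<le> 4/3 * (\<Sum>t<N. l1 (mpow L t)^2) * l1 E"
      by (rule lyap_bound[OF _ DE]) (use s1 in \<open>simp add: L_def\<close>)
    also have "\<dots> \<le> H * (cE * \<delta>)"
    proof -
      have "(\<Sum>t<N. l1 (mpow L t)^2) \<le> G" using s1 unfolding L_def by blast
      then have "4/3 * (\<Sum>t<N. l1 (mpow L t)^2) * l1 E \<le> (4/3 * G) * (cE * \<delta>)"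
        by - (rule mult_mono, use lE l1_nonneg[of E] G0 in auto)
      then show ?thesis by (simp add: H_def)
    qed
    finally have lD: "l1 (P - P') \<le> H * (cE * \<delta>)" .
    have "frob (theta A B Q R K - theta A B Q R K') \<le> l1 (theta A B Q R K - theta A B Q R K')"
      by (simp add: frob_eq_norm norm_le_l1)
    also have "\<dots> \<le> (l1 A + l1 B)^2 * l1 (P - P')" unfolding P_def P'_def by (rule theta_diff_l1)
    also have "\<dots> \<le> (l1 A + l1 B)^2 * (H * (cE * \<delta>))" using lD by (intro mult_left_mono) auto
    also have "\<delta> \<le> m * n * frob (K - K')"
      unfolding \<delta>_def frob_eq_norm m_def n_def by (rule l1_le_norm)
    then have "(l1 A + l1 B)^2 * (H * (cE * \<delta>)) \<le> (l1 A + l1 B)^2 * (H * (cE * (m * n * frob (K - K'))))"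
      using H0 cE0 by (intro mult_left_mono) auto
    also have "\<dots> \<le> c1 * frob (K - K')"
    proof -
      have f0: "0 \<le> frob (K - K')" by (simp add: frob_eq_norm)
      have "(l1 A + l1 B)^2 * (H * (cE * (m * n * frob (K - K')))) = ((l1 A + l1 B)^2 * H * cE * (m * n)) * frob (K - K')"
        by (simp add: algebra_simps)
      also have "\<dots> \<le> c1 * frob (K - K')" unfolding c1_def using f0 by (intro mult_right_mono) auto
      finally show ?thesis .
    qed
    finally show ?thesis .
  qed
  show ?thesis using c10 main by blast
qed


end
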